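(* Let $1<s<n$, $r=s+n-1$, $d\ge1$ and positive integers $d_1,\dots,d_r\le d$. The type 1 initial system $g_1,\dots,g_r$ defined in the context satisfies condition (H): it defines in $\mathbb{A}^n\times\{\mu_s\ne0\}\subset\mathbb{A}^n\times\mathbb{P}^{s-1}$ a $0$-dimensional variety consisting of exactly $D=\big(\prod_{i=1}^sd_i\big)\big(\sum_{E\subset\{s+1,\dots,r\},\#E=n-s}\prod_{j\in E}d_j\big)$ points $s_1,\dots,s_D$ with $\pi_x(s_i)\ne\pi_x(s_j)$ for $i\ne j$, and the Jacobian determinant of the polynomials obtained from $g_1,\dots,g_r$ by setting $\mu_s=1$ does not vanish at any of these points. The same holds (with $D=\prod_{i=1}^n d_i$ points in $\mathbb{A}^n$ and nonvanishing Jacobian) for $s=1$ and $s=n$.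
   Context: Type 1 initial system for $1<s<n$: $g_i(x)=\prod_{j=1}^{d_i}(x_i-j)$ for $1\le i\le s$, and $g_i(x,\mu)=\big(\prod_{j=1}^{d_i}\phi_{ij}(x)\big)\psi_i(\mu)$ for $s+1\le i\le r$, where $\phi_{ij}(x)=\sum_{k=s+1}^n\frac{x_k}{(i-s-1)d+j-1+k-s}+\frac1{(i-s-1)d+j-1+n+1-s}$ and $\psi_i(\mu)=\sum_{k=1}^s\frac{\mu_k}{i-s-1+k}$, with variables $x=(x_1,\dots,x_n)$, $\mu=(\mu_1,\dots,\mu_s)$. For $s=1$ and $s=n$ the type 1 initial system is $g_i(x)=\prod_{j=1}^{d_i}(x_i-j)$, $1\le i\le n$. $\pi_x$ is the projection to $\mathbb{A}^n$. *)

theory Defs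
  imports "HOL-Analysis.Analysis"
begin

text \<open>Points of affine space are encoded as functions nat => complex; coordinate k lives
at index k (1-based) and all coordinates outside the relevant index range are 0.\<close>

text \<open>phi_{ij}(x) of the type 1 initial system (i >= s+1, j >= 1, so all denominators positive).\<close>
definition phi1 :: "nat \<Rightarrow> nat \<Rightarrow> nat \<Rightarrow> nat \<Rightarrow> nat \<Rightarrow> (nat \<Rightarrow> complex) \<Rightarrow> complex" where
  "phi1 n s d i j x =
     (\<Sum>k=s+1..n. x k / of_nat ((i-s-1)*d + (j-1) + (k-s)))
     + 1 / of_nat ((i-s-1)*d + (j-1) + (n+1-s))"

definition psi1 :: "nat \<Rightarrow> nat \<Rightarrow> (nat \<Rightarrow> complex) \<Rightarrow> complex" where
  "psi1 s i mu = (\<Sum>k=1..s. mu k / of_nat ((i-s-1) + k))"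

definition type1_g :: "nat \<Rightarrow> nat \<Rightarrow> nat \<Rightarrow> (nat \<Rightarrow> nat) \<Rightarrow> nat
    \<Rightarrow> (nat \<Rightarrow> complex) \<Rightarrow> (nat \<Rightarrow> complex) \<Rightarrow> complex" where
  "type1_g n s d dd i x mu =
     (if i \<le> s then (\<Prod>j=1..dd i. x i - of_nat j)
      else (\<Prod>j=1..dd i. phi1 n s d i j x) * psi1 s i mu)"

text \<open>Dehomogenisation mu_s = 1: affine variables z_1..z_n are x_1..x_n and
 z_{n+1}..z_{n+s-1} are mu_1..mu_{s-1}.\<close>
definition type1_chart :: "nat \<Rightarrow> nat \<Rightarrow> nat \<Rightarrow> (nat \<Rightarrow> nat) \<Rightarrow> nat
    \<Rightarrow> (nat \<Rightarrow> complex) \<Rightarrow> complex" where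
  "type1_chart n s d dd i z =
     type1_g n s d dd i z (\<lambda>k. if k = s then 1 else z (n + k))"

definition type1_simple :: "(nat \<Rightarrow> nat) \<Rightarrow> nat \<Rightarrow> (nat \<Rightarrow> complex) \<Rightarrow> complex" where
  "type1_simple dd i x = (\<Prod>j=1..dd i. x i - of_nat j)"

definition zero_set :: "nat \<Rightarrow> (nat \<Rightarrow> (nat \<Rightarrow> complex) \<Rightarrow> complex) \<Rightarrow> (nat \<Rightarrow> complex) set" where
  "zero_set m F = {z. (\<forall>k. k \<notin> {1..m} \<longrightarrow> z k = 0) \<and> (\<forall>i\<in>{1..m}. F i z = 0)}"

definition partial :: "((nat \<Rightarrow> complex) \<Rightarrow> complex) \<Rightarrow> nat \<Rightarrow> (nat \<Rightarrow> complex) \<Rightarrow> complex" where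
  "partial f k z = deriv (\<lambda>t. f (z(k := t))) (z k)"

definition jacobian_det :: "nat \<Rightarrow> (nat \<Rightarrow> (nat \<Rightarrow> complex) \<Rightarrow> complex) \<Rightarrow> (nat \<Rightarrow> complex) \<Rightarrow> complex" where
  "jacobian_det m F z =
     (\<Sum>\<sigma> | \<sigma> permutes {1..m}. of_int (sign \<sigma>) * (\<Prod>i=1..m. partial (F i) (\<sigma> i) z))"

definition proj_x :: "nat \<Rightarrow> (nat \<Rightarrow> complex) \<Rightarrow> (nat \<Rightarrow> complex)" where
  "proj_x n z = (\<lambda>k. if k \<in> {1..n} then z k else 0)"

end

theory Submission
  imports Defs "Jordan_Normal_Form.Determinant"
begin

definition Gm :: "nat \<Rightarrow> (nat \<Rightarrow> nat \<Rightarrow> complex) \<Rightarrow> complex mat" where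
  "Gm m F = mat (Suc m) (Suc m) (\<lambda>(i,j). if i = 0 then (if j = 0 then 1 else 0) else if j = 0 then 0 else F i j)"

lemma Gm_carrier: "Gm m F \<in> carrier_mat (Suc m) (Suc m)"
  unfolding Gm_def by simp

lemma Gm_mult_vec:
  assumes "i \<in> {1..m}" "dim_vec v = Suc m"
  shows "(Gm m F *\<^sub>v v) $ i = (\<Sum>j=1..m. F i j * v $ j)"
proof -
  have "(Gm m F *\<^sub>v v) $ i = (\<Sum>j=0..<Suc m. (if j = 0 then 0 else F i j) * v $ j)"
    using assms unfolding Gm_def by (auto simp: scalar_prod_def intro!: sum.cong)
  also have "\<dots> = (\<Sum>j=1..m. F i j * v $ j)"
    by (subst sum.atLeast_Suc_lessThan) (auto intro!: sum.cong simp: atLeastLessThanSuc_atLeastAtMost)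
  finally show ?thesis .
qed

lemma Gm_mult_vec0:
  assumes "dim_vec v = Suc m"
  shows "(Gm m F *\<^sub>v v) $ 0 = v $ 0"
proof -
  have "(Gm m F *\<^sub>v v) $ 0 = (\<Sum>j=0..<Suc m. (if j = 0 then 1 else 0) * v $ j)"
    using assms unfolding Gm_def by (auto simp: scalar_prod_def intro!: sum.cong)
  also have "\<dots> = v $ 0"
    by (subst sum.atLeast_Suc_lessThan) auto
  finally show ?thesis .
qed

lemma Gm_det_nz:
  fixes F :: "nat \<Rightarrow> nat \<Rightarrow> complex" and m :: nat
  assumes ker: "\<And>v. \<forall>i\<in>{1..m}. (\<Sum>j=1..m. F i j * v j) = 0 \<Longrightarrow> \<forall>j\<in>{1..m}. v j = 0"
  shows "Determinant.det (Gm m F) \<noteq> 0"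
proof
  assume "Determinant.det (Gm m F) = 0"
  then obtain v where v: "v \<in> carrier_vec (Suc m)" "v \<noteq> 0\<^sub>v (Suc m)" "Gm m F *\<^sub>v v = 0\<^sub>v (Suc m)"
    using det_0_iff_vec_prod_zero_field[OF Gm_carrier] by blast
  have dv: "dim_vec v = Suc m" using v(1) by simp
  have "\<forall>i\<in>{1..m}. (\<Sum>j=1..m. F i j * v $ j) = 0"
  proof
    fix i assume i: "i \<in> {1..m}"
    have "(Gm m F *\<^sub>v v) $ i = 0" using v(3) i by simp
    then show "(\<Sum>j=1..m. F i j * v $ j) = 0" using Gm_mult_vec[OF i dv] by simp
  qed
  from ker[OF this] have 1: "\<forall>j\<in>{1..m}. v $ j = 0" .
  have "(Gm m F *\<^sub>v v) $ 0 = 0" using v(3) by simp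
  then have 0: "v $ 0 = 0" using Gm_mult_vec0[OF dv] by simp
  have "v = 0\<^sub>v (Suc m)"
  proof (rule eq_vecI)
    fix i assume "i < dim_vec (0\<^sub>v (Suc m) :: complex vec)"
    then have "i < Suc m" by simp
    then show "v $ i = 0\<^sub>v (Suc m) $ i" using 0 1 by (cases i) auto
  qed (simp add: dv)
  with v(2) show False by simp
qed

lemma ker_solve:
  fixes F :: "nat \<Rightarrow> nat \<Rightarrow> complex" and m :: nat and b :: "nat \<Rightarrow> complex"
  assumes ker: "\<And>v. \<forall>i\<in>{1..m}. (\<Sum>j=1..m. F i j * v j) = 0 \<Longrightarrow> \<forall>j\<in>{1..m}. v j = 0"
  shows "\<exists>v. \<forall>i\<in>{1..m}. (\<Sum>j=1..m. F i j * v j) = b i"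
proof -
  have "Gm m F \<in> Units (ring_mat TYPE(complex) (Suc m) ())"
    using det_non_zero_imp_unit[OF Gm_carrier Gm_det_nz[OF ker]] .
  then obtain H where H: "H \<in> carrier_mat (Suc m) (Suc m)" "Gm m F * H = 1\<^sub>m (Suc m)"
    unfolding Units_def ring_mat_def by auto
  define bv where "bv = vec (Suc m) (\<lambda>i. b i)"
  define w where "w = H *\<^sub>v bv"
  have dw: "dim_vec w = Suc m" using H(1) unfolding w_def by simp
  have eq: "Gm m F *\<^sub>v w = bv"
    unfolding w_def using H
    by (subst assoc_mult_mat_vec[symmetric, OF Gm_carrier H(1)]) (auto simp: bv_def)
  have "\<forall>i\<in>{1..m}. (\<Sum>j=1..m. F i j * w $ j) = b i"
  proof
    fix i assume i: "i \<in> {1..m}"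
    have "(Gm m F *\<^sub>v w) $ i = b i" using eq i by (simp add: bv_def)
    then show "(\<Sum>j=1..m. F i j * w $ j) = b i" using Gm_mult_vec[OF i dw] by simp
  qed
  then show ?thesis by blast
qed

lemma det_Gm: "Determinant.det (Gm m F) = (\<Sum>\<sigma> | \<sigma> permutes {1..m}. of_int (sign \<sigma>) * (\<Prod>i=1..m. F i (\<sigma> i)))"
proof -
  let ?G = "Gm m F"
  let ?P = "{p. p permutes {0..<Suc m}}"
  let ?Q = "{p. p permutes {1..m}}"
  have QP: "?Q \<subseteq> ?P"
    by (auto intro: permutes_subset)
  have det: "Determinant.det ?G = (\<Sum>p\<in>?P. signof p * (\<Prod>i=0..<Suc m. ?G $$ (i, p i)))"
    using det_def'[OF Gm_carrier] by simp
  have z: "\<forall>p\<in>?P - ?Q. signof p * (\<Prod>i=0..<Suc m. ?G $$ (i, p i)) = 0"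
  proof
    fix p assume p: "p \<in> ?P - ?Q"
    have "p 0 \<noteq> 0"
    proof
      assume p0: "p 0 = 0"
      have pp: "p permutes {0..<Suc m}" using p by simp
      have "p permutes {1..m}"
        unfolding permutes_def
      proof (intro conjI allI impI)
        fix x assume "x \<notin> {1..m}"
        then have "x = 0 \<or> x \<notin> {0..<Suc m}" by auto
        then show "p x = x" using p0 pp by (auto simp: permutes_def)
      next
        fix y show "\<exists>!x. p x = y" using pp by (simp add: permutes_def)
      qed
      with p show False by simp
    qed
    moreover have "p 0 < Suc m" using p permutes_in_image[of p "{0..<Suc m}" 0] by auto
    ultimately have "?G $$ (0, p 0) = 0" unfolding Gm_def by simp
    then show "signof p * (\<Prod>i=0..<Suc m. ?G $$ (i, p i)) = 0"
      by (subst prod.atLeast_Suc_lessThan) auto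
  qed
  have "Determinant.det ?G = (\<Sum>p\<in>?Q. signof p * (\<Prod>i=0..<Suc m. ?G $$ (i, p i)))"
    unfolding det by (rule sum.mono_neutral_right[OF _ QP z]) (simp add: finite_permutations)
  also have "\<dots> = (\<Sum>\<sigma>\<in>?Q. of_int (sign \<sigma>) * (\<Prod>i=1..m. F i (\<sigma> i)))"
  proof (rule sum.cong[OF refl])
    fix p assume p: "p \<in> ?Q"
    then have pp: "p permutes {1..m}" by simp
    have p0: "p 0 = 0" using pp by (simp add: permutes_def)
    have "(\<Prod>i=0..<Suc m. ?G $$ (i, p i)) = (\<Prod>i=1..m. ?G $$ (i, p i))"
      using p0 by (subst prod.atLeast_Suc_lessThan) (auto simp: Gm_def atLeastLessThanSuc_atLeastAtMost)
    also have "\<dots> = (\<Prod>i=1..m. F i (p i))"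
    proof (rule prod.cong[OF refl])
      fix i assume i: "i \<in> {1..m}"
      then have "p i \<in> {1..m}" using permutes_in_image[OF pp] by simp
      then show "?G $$ (i, p i) = F i (p i)" using i unfolding Gm_def by auto
    qed
    finally show "signof p * (\<Prod>i=0..<Suc m. ?G $$ (i, p i)) = of_int (sign p) * (\<Prod>i=1..m. F i (p i))"
      by simp
  qed
  finally show ?thesis by simp
qed

lemma leibniz_nz:
  fixes F :: "nat \<Rightarrow> nat \<Rightarrow> complex"
  assumes ker: "\<And>v. \<forall>i\<in>{1..m}. (\<Sum>j=1..m. F i j * v j) = 0 \<Longrightarrow> \<forall>j\<in>{1..m}. v j = 0"
  shows "(\<Sum>\<sigma> | \<sigma> permutes {1..m}. of_int (sign \<sigma>) * (\<Prod>i=1..m. F i (\<sigma> i))) \<noteq> 0"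
  using Gm_det_nz[OF ker] det_Gm by simp

lemma cauchy_ker:
  fixes c :: "nat \<Rightarrow> complex" and A :: "nat set" and N :: nat
  assumes fin: "finite A" and cA: "card A = N"
    and eq: "\<forall>a\<in>A. (\<Sum>k=1..N. c k / of_nat (a+k)) = 0"
  shows "\<forall>k\<in>{1..N}. c k = 0"
proof (cases "N = 0")
  case True then show ?thesis by simp
next
  case N: False
  define P :: "complex poly" where
    "P = (\<Sum>k\<in>{1..N}. Polynomial.smult (c k) (\<Prod>l\<in>{1..N}-{k}. [:of_nat l, 1:]))"
  have evalP: "poly P x = (\<Sum>k\<in>{1..N}. c k * (\<Prod>l\<in>{1..N}-{k}. (of_nat l + x)))" for x
    by (simp add: P_def poly_sum poly_prod)
  have deg: "degree P \<le> N - 1"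
    unfolding P_def
  proof (rule degree_sum_le)
    fix k assume k: "k \<in> {1..N}"
    have "degree (\<Prod>l\<in>{1..N}-{k}. [:of_nat l, 1::complex:]) \<le> (\<Sum>l\<in>{1..N}-{k}. 1)"
      using degree_prod_sum_le[of "{1..N}-{k}" "\<lambda>l. [:of_nat l, 1::complex:]"] by (simp add: o_def)
    also have "\<dots> = N - 1" using k by simp
    finally show "degree (Polynomial.smult (c k) (\<Prod>l\<in>{1..N}-{k}. [:of_nat l, 1::complex:])) \<le> N - 1"
      using degree_smult_le order_trans by blast
  qed simp
  have root: "poly P (of_nat a) = 0" if a: "a \<in> A" for a
  proof -
    have "poly P (of_nat a) = (\<Sum>k\<in>{1..N}. (\<Prod>l\<in>{1..N}. (of_nat l + of_nat a)) * (c k / of_nat (a+k)))"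
      unfolding evalP
    proof (rule sum.cong[OF refl])
      fix k assume k: "k \<in> {1..N}"
      have "(\<Prod>l\<in>{1..N}. (of_nat l + of_nat a :: complex)) = (of_nat k + of_nat a) * (\<Prod>l\<in>{1..N}-{k}. (of_nat l + of_nat a))"
        using k by (subst prod.remove[of _ k]) auto
      moreover have "a + k \<noteq> 0" using k by simp
      then have "(of_nat (a+k) :: complex) \<noteq> 0" by (metis of_nat_eq_0_iff)
      ultimately show "c k * (\<Prod>l\<in>{1..N}-{k}. (of_nat l + of_nat a)) = (\<Prod>l\<in>{1..N}. (of_nat l + of_nat a)) * (c k / of_nat (a+k))"
        by (simp add: field_simps add.commute)
    qed
    also have "\<dots> = (\<Prod>l\<in>{1..N}. (of_nat l + of_nat a)) * (\<Sum>k=1..N. c k / of_nat (a+k))"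
      by (simp add: sum_distrib_left)
    also have "\<dots> = 0" using eq a by simp
    finally show ?thesis .
  qed
  have P0: "P = 0"
  proof (rule ccontr)
    assume nz: "P \<noteq> 0"
    have "(of_nat ` A :: complex set) \<subseteq> {x. poly P x = 0}" using root by auto
    then have "card (of_nat ` A :: complex set) \<le> card {x. poly P x = 0}"
      using poly_roots_finite[OF nz] by (rule card_mono[rotated])
    moreover have "card (of_nat ` A :: complex set) = N"
      using cA by (simp add: card_image inj_on_def)
    ultimately have "N \<le> degree P" using card_poly_roots_bound[OF nz] by linarith
    with deg N show False by linarith
  qed
  show ?thesis
  proof
    fix k0 assume k0: "k0 \<in> {1..N}"
    have "poly P (- of_nat k0) = (\<Sum>k\<in>{1..N}. if k = k0 then c k0 * (\<Prod>l\<in>{1..N}-{k0}. (of_nat l - of_nat k0)) else 0)"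
      unfolding evalP
    proof (rule sum.cong[OF refl])
      fix k assume k: "k \<in> {1..N}"
      show "c k * (\<Prod>l\<in>{1..N}-{k}. (of_nat l + - of_nat k0)) = (if k = k0 then c k0 * (\<Prod>l\<in>{1..N}-{k0}. (of_nat l - of_nat k0)) else 0)"
      proof (cases "k = k0")
        case True then show ?thesis by simp
      next
        case False
        then have "k0 \<in> {1..N}-{k}" using k0 by simp
        then have "(\<Prod>l\<in>{1..N}-{k}. (of_nat l + - of_nat k0 :: complex)) = 0"
          by (intro prod_zero) auto
        then show ?thesis using False by simp
      qed
    qed
    also have "\<dots> = c k0 * (\<Prod>l\<in>{1..N}-{k0}. (of_nat l - of_nat k0))"
      using k0 by (simp add: sum.delta)
    finally have "c k0 * (\<Prod>l\<in>{1..N}-{k0}. (of_nat l - of_nat k0 :: complex)) = 0"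
      using P0 by simp
    moreover have "(\<Prod>l\<in>{1..N}-{k0}. (of_nat l - of_nat k0 :: complex)) \<noteq> 0"
      by (simp add: prod_zero_iff)
    ultimately show "c k0 = 0" by simp
  qed
qed

definition cf :: "nat \<Rightarrow> nat \<Rightarrow> (nat \<Rightarrow> complex) \<Rightarrow> complex" where
  "cf N a c = (\<Sum>k=1..N. c k / of_nat (a+k)) + 1 / of_nat (a+N+1)"

lemma cf_atmost:
  assumes fin: "finite A" and z: "\<forall>a\<in>A. cf N a c = 0"
  shows "card A \<le> N"
proof (rule ccontr)
  assume "\<not> card A \<le> N"
  then have "Suc N \<le> card A" by simp
  then obtain B where B: "B \<subseteq> A" "card B = Suc N" "finite B"
    by (rule obtain_subset_with_card_n)
  define c' where "c' = (\<lambda>k. if k = Suc N then 1 else c k)"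
  have "\<forall>a\<in>B. (\<Sum>k=1..Suc N. c' k / of_nat (a+k)) = 0"
  proof
    fix a assume "a \<in> B"
    then have "cf N a c = 0" using z B by auto
    moreover have "(\<Sum>k=1..N. c' k / of_nat (a+k)) = (\<Sum>k=1..N. c k / of_nat (a+k))"
      by (rule sum.cong) (auto simp: c'_def)
    ultimately show "(\<Sum>k=1..Suc N. c' k / of_nat (a+k)) = 0"
      by (simp add: cf_def c'_def add_ac)
  qed
  from cauchy_ker[OF B(3) B(2) this] have "c' (Suc N) = 0" by simp
  then show False by (simp add: c'_def)
qed

lemma cf_unique:
  assumes fin: "finite A" and cA: "card A = N"
    and z1: "\<forall>a\<in>A. cf N a c = 0" and z2: "\<forall>a\<in>A. cf N a c' = 0"
  shows "\<forall>k\<in>{1..N}. c k = c' k"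
proof -
  have "\<forall>a\<in>A. (\<Sum>k=1..N. (c k - c' k) / of_nat (a+k)) = 0"
  proof
    fix a assume a: "a \<in> A"
    have "(\<Sum>k=1..N. (c k - c' k) / of_nat (a+k)) = cf N a c - cf N a c'"
      by (simp add: cf_def diff_divide_distrib sum_subtractf)
    then show "(\<Sum>k=1..N. (c k - c' k) / of_nat (a+k)) = 0" using a z1 z2 by simp
  qed
  from cauchy_ker[OF fin cA this] show ?thesis by simp
qed

lemma cf_exists:
  assumes fin: "finite A" and cA: "card A = N"
  shows "\<exists>c. \<forall>a\<in>A. cf N a c = 0"
proof -
  obtain f where f: "bij_betw f {1..N} A"
    using ex_bij_betw_nat_finite_1[OF fin] cA by auto
  define F where "F = (\<lambda>i j. 1 / (of_nat (f i + j) :: complex))"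
  have ker: "\<forall>j\<in>{1..N}. v j = 0" if h: "\<forall>i\<in>{1..N}. (\<Sum>j=1..N. F i j * v j) = 0" for v
  proof -
    have "\<forall>a\<in>A. (\<Sum>k=1..N. v k / of_nat (a+k)) = 0"
    proof
      fix a assume "a \<in> A"
      then obtain i where i: "i \<in> {1..N}" "a = f i" using f by (auto simp: bij_betw_def)
      then show "(\<Sum>k=1..N. v k / of_nat (a+k)) = 0" using h by (simp add: F_def)
    qed
    from cauchy_ker[OF fin cA this] show ?thesis .
  qed
  obtain v where v: "\<forall>i\<in>{1..N}. (\<Sum>j=1..N. F i j * v j) = - 1 / of_nat (f i + N + 1)"
    using ker_solve[of N F "\<lambda>i. - 1 / of_nat (f i + N + 1)"] ker by blast
  have "\<forall>a\<in>A. cf N a v = 0"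
  proof
    fix a assume "a \<in> A"
    then obtain i where i: "i \<in> {1..N}" "a = f i" using f by (auto simp: bij_betw_def)
    then show "cf N a v = 0" using v by (simp add: F_def cf_def)
  qed
  then show ?thesis by blast
qed

lemma partial_eqI:
  assumes "\<And>t. f (z(q:=t)) = h t" and "(h has_field_derivative D) (at (z q))"
  shows "partial f q z = D"
proof -
  have "(\<lambda>t. f (z(q:=t))) = h" using assms(1) by auto
  then show ?thesis unfolding partial_def using DERIV_imp_deriv[OF assms(2)] by simp
qed

lemma deriv_prod_aff:
  fixes c b :: "nat \<Rightarrow> complex"
  shows "((\<lambda>t. \<Prod>j\<in>S. (c j + b j * (t - t0))) has_field_derivative
          (\<Sum>j\<in>S. b j * (\<Prod>l\<in>S-{j}. c l))) (at t0)"
proof -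
  have "((\<lambda>t. \<Prod>j\<in>S. (c j + b j * (t - t0))) has_field_derivative
          (\<Sum>j\<in>S. b j * (\<Prod>l\<in>S-{j}. c l + b l * (t0 - t0)))) (at t0)"
    by (rule has_field_derivative_prod) (auto intro!: derivative_eq_intros)
  then show ?thesis by simp
qed

lemma deriv_prod_aff2:
  fixes c b :: "nat \<Rightarrow> complex"
  shows "((\<lambda>t. (\<Prod>j\<in>S. (c j + b j * (t - t0))) * (C + B * (t - t0))) has_field_derivative
          ((\<Sum>j\<in>S. b j * (\<Prod>l\<in>S-{j}. c l)) * C + (\<Prod>j\<in>S. c j) * B)) (at t0)"
proof -
  have 2: "((\<lambda>t. C + B * (t - t0)) has_field_derivative B) (at t0)"
    by (auto intro!: derivative_eq_intros)
  show ?thesis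
    by (rule DERIV_cong[OF DERIV_mult[OF deriv_prod_aff 2]]) (simp add: algebra_simps)
qed

lemma cf_cong: "(\<And>k. k \<in> {1..N} \<Longrightarrow> c k = c' k) \<Longrightarrow> cf N a c = cf N a c'"
  unfolding cf_def by (auto intro!: sum.cong)

lemma cf_upd:
  "cf N a (\<lambda>k. (z(q:=t)) (off+k)) =
     cf N a (\<lambda>k. z (off+k)) + (if q \<in> {off+1..off+N} then (t - z q) / of_nat (a + (q - off)) else 0)"
proof (cases "q \<in> {off+1..off+N}")
  case False
  have eq: "cf N a (\<lambda>k. (z(q:=t)) (off+k)) = cf N a (\<lambda>k. z (off+k))"
    using False by (intro cf_cong) auto
  have e: "(if q \<in> {off+1..off+N} then (t - z q) / of_nat (a + (q - off)) else 0) = 0"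
    using False by (simp only: if_False)
  show ?thesis by (simp only: e eq add_0_right)
next
  case True
  define k0 where "k0 = q - off"
  have k0: "k0 \<in> {1..N}" "q = off + k0" using True by (auto simp: k0_def)
  have "(\<Sum>k=1..N. (z(q:=t)) (off+k) / of_nat (a+k)) =
        (\<Sum>k=1..N. z (off+k) / of_nat (a+k) + (if k = k0 then (t - z q) / of_nat (a + k0) else 0))"
    using k0 by (intro sum.cong) (auto simp: diff_divide_distrib)
  also have "\<dots> = (\<Sum>k=1..N. z (off+k) / of_nat (a+k)) + (t - z q) / of_nat (a + k0)"
    using k0 by (simp add: sum.distrib)
  finally show ?thesis using True by (simp add: cf_def k0_def)
qed

locale T1 =
  fixes n s d :: nat and dd :: "nat \<Rightarrow> nat"
  assumes s1: "1 < s" and sn: "s < n" and d1: "d \<ge> 1"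
    and ddb: "\<forall>i\<in>{1..s+n-1}. 1 \<le> dd i \<and> dd i \<le> d"
begin

definition "m = n - s"
definition "p = s - 1"
definition "r = s + n - 1"
definition "al i j = (i-s-1)*d + (j-1)"
definition "ee i = i - s - 1"
definition "PH i j z = cf m (al i j) (\<lambda>k. z (s+k))"
definition "PS i z = cf p (ee i) (\<lambda>k. z (n+k))"

lemma mpr: "r = n + p" "n = s + m" "s = Suc p" "r - s = m + p"
  using s1 sn by (auto simp: m_def p_def r_def)

lemma phi_eq: "phi1 n s d i j z = PH i j z"
proof -
  have iv: "{s+1..n} = {1+s..m+s}" using sn by (auto simp: m_def)
  have "(\<Sum>k=s+1..n. z k / of_nat ((i-s-1)*d + (j-1) + (k-s))) = (\<Sum>k=1..m. z (k+s) / of_nat ((i-s-1)*d + (j-1) + (k+s-s)))"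
    unfolding iv by (rule sum.shift_bounds_cl_nat_ivl)
  also have "\<dots> = (\<Sum>k=1..m. z (s+k) / of_nat (al i j + k))"
    by (simp add: al_def add.commute)
  finally show ?thesis
    unfolding phi1_def PH_def cf_def using sn by (simp add: al_def m_def add_ac)
qed

lemma psi_eq: "psi1 s i (\<lambda>k. if k = s then 1 else z (n+k)) = PS i z"
proof -
  have iv: "{1..s} = insert s {1..p}" "s \<notin> {1..p}" using s1 by (auto simp: p_def)
  have e: "(i-s-1) + s = ee i + p + 1" using s1 by (simp add: ee_def p_def)
  have "psi1 s i (\<lambda>k. if k = s then 1 else z (n+k)) =
        1 / of_nat ((i-s-1) + s) + (\<Sum>k\<in>{1..p}. (if k = s then 1 else z (n+k)) / of_nat ((i-s-1) + k))"
    unfolding psi1_def iv(1) by (subst sum.insert[OF _ iv(2)]) simp_all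
  also have "(\<Sum>k\<in>{1..p}. (if k = s then 1 else z (n+k)) / of_nat ((i-s-1) + k)) = (\<Sum>k=1..p. z (n+k) / of_nat (ee i + k))"
    using iv(2) by (intro sum.cong) (auto simp: ee_def)
  finally show ?thesis unfolding PS_def cf_def e by simp
qed

lemma chart_hi: "i \<in> {s+1..r} \<Longrightarrow> type1_chart n s d dd i z = (\<Prod>j=1..dd i. PH i j z) * PS i z"
  unfolding type1_chart_def type1_g_def by (simp add: phi_eq psi_eq)

lemma chart_lo: "i \<in> {1..s} \<Longrightarrow> type1_chart n s d dd i z = (\<Prod>j=1..dd i. (z i - of_nat j))"
  unfolding type1_chart_def type1_g_def by simp

lemma ddb': "i \<in> {1..r} \<Longrightarrow> 1 \<le> dd i \<and> dd i \<le> d"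
  using ddb by (simp add: r_def)

lemma ddb_hi: "s < i \<Longrightarrow> i \<le> r \<Longrightarrow> 1 \<le> dd i \<and> dd i \<le> d"
  using ddb'[of i] by auto

definition "Zphi z = {(i,j). i \<in> {s+1..r} \<and> j \<in> {1..dd i} \<and> PH i j z = 0}"
definition "Zpsi z = {i \<in> {s+1..r}. PS i z = 0}"
definition "Pairs = {(i,j). i \<in> {s+1..r} \<and> j \<in> {1..dd i}}"

lemma Pairs_fin: "finite Pairs"
proof -
  have "Pairs \<subseteq> {s+1..r} \<times> {1..d}"
  proof
    fix x assume x: "x \<in> Pairs"
    obtain i j where ij: "x = (i,j)" by (cases x)
    show "x \<in> {s+1..r} \<times> {1..d}" using x ddb_hi[of i] by (auto simp: Pairs_def ij)
  qed
  then show ?thesis by (rule finite_subset) simp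
qed

lemma al_inj: "inj_on (\<lambda>(i,j). al i j) Pairs"
proof (rule inj_onI, clarify)
  fix i j i' j' assume a: "(i,j) \<in> Pairs" "(i',j') \<in> Pairs" and e: "al i j = al i' j'"
  have lt: "j - 1 < d" "j' - 1 < d" using a ddb_hi[of i] ddb_hi[of i'] by (auto simp: Pairs_def)
  have "al i j div d = i-s-1" "al i j mod d = j-1" using lt d1 by (auto simp: al_def)
  moreover have "al i' j' div d = i'-s-1" "al i' j' mod d = j'-1" using lt d1 by (auto simp: al_def)
  ultimately have "i-s-1 = i'-s-1" "j-1 = j'-1" using e by metis+
  then show "i = i' \<and> j = j'" using a by (auto simp: Pairs_def)
qed

lemma ee_inj: "inj_on ee {s+1..r}"
  by (rule inj_onI) (auto simp: ee_def)

lemma Zphi_sub: "Zphi z \<subseteq> Pairs" by (auto simp: Zphi_def Pairs_def)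

lemma card_Zphi: "card (Zphi z) \<le> m"
proof -
  have fin: "finite (Zphi z)" using Zphi_sub Pairs_fin by (rule finite_subset)
  let ?A = "(\<lambda>(i,j). al i j) ` Zphi z"
  have "card ?A = card (Zphi z)"
    using inj_on_subset[OF al_inj Zphi_sub] by (rule card_image)
  moreover have "card ?A \<le> m"
    by (rule cf_atmost) (use fin in \<open>auto simp: Zphi_def PH_def\<close>)
  ultimately show ?thesis by simp
qed

lemma card_Zpsi: "card (Zpsi z) \<le> p"
proof -
  let ?A = "ee ` Zpsi z"
  have "card ?A = card (Zpsi z)"
    using inj_on_subset[OF ee_inj] by (rule card_image) (auto simp: Zpsi_def)
  moreover have "card ?A \<le> p"
    by (rule cf_atmost) (auto simp: Zpsi_def PS_def)
  ultimately show ?thesis by simp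
qed

lemma PH_cong: "(\<And>k. k \<in> {s+1..n} \<Longrightarrow> z k = z' k) \<Longrightarrow> PH i j z = PH i j z'"
  unfolding PH_def by (rule cf_cong) (auto simp: m_def)

lemma Zphi_cong: "(\<And>k. k \<in> {s+1..n} \<Longrightarrow> z k = z' k) \<Longrightarrow> Zphi z = Zphi z'"
  unfolding Zphi_def using PH_cong by (metis (no_types, lifting))

lemma inV: "z \<in> zero_set r (type1_chart n s d dd) \<longleftrightarrow>
   (\<forall>k. k \<notin> {1..r} \<longrightarrow> z k = 0) \<and> (\<forall>i\<in>{1..s}. \<exists>j\<in>{1..dd i}. z i = of_nat j)
   \<and> (\<forall>i\<in>{s+1..r}. (\<exists>j\<in>{1..dd i}. PH i j z = 0) \<or> PS i z = 0)"
proof -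
  have split: "{1..r} = {1..s} \<union> {s+1..r}" using mpr by auto
  have lo: "type1_chart n s d dd i z = 0 \<longleftrightarrow> (\<exists>j\<in>{1..dd i}. z i = of_nat j)" if "i \<in> {1..s}" for i
    using that by (simp add: chart_lo)
  have hi: "type1_chart n s d dd i z = 0 \<longleftrightarrow> (\<exists>j\<in>{1..dd i}. PH i j z = 0) \<or> PS i z = 0" if "i \<in> {s+1..r}" for i
    using that by (simp add: chart_hi)
  show ?thesis unfolding zero_set_def split using lo hi by blast
qed

definition "Tset = PiE {1..s} (\<lambda>i. {1..dd i}) \<times>
   (SIGMA E:{E. E \<subseteq> {s+1..r} \<and> card E = m}. PiE E (\<lambda>i. {1..dd i}))"

lemma card_Tset: "card Tset = (\<Prod>i=1..s. dd i) * (\<Sum>E | E \<subseteq> {s+1..r} \<and> card E = m. \<Prod>j\<in>E. dd j)"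
proof -
  have f: "finite {E. E \<subseteq> {s+1..r} \<and> card E = m}" by (rule finite_subset[of _ "Pow {s+1..r}"]) auto
  have "card (SIGMA E:{E. E \<subseteq> {s+1..r} \<and> card E = m}. PiE E (\<lambda>i. {1..dd i})) =
        (\<Sum>E | E \<subseteq> {s+1..r} \<and> card E = m. card (PiE E (\<lambda>i. {1..dd i})))"
    using f by (subst card_SigmaI) (auto intro!: finite_PiE dest: finite_subset)
  also have "\<dots> = (\<Sum>E | E \<subseteq> {s+1..r} \<and> card E = m. \<Prod>j\<in>E. dd j)"
    by (rule sum.cong[OF refl]) (auto simp: card_PiE dest: finite_subset)
  finally show ?thesis unfolding Tset_def by (simp add: card_cartesian_product card_PiE)
qed

lemma finite_Tset: "finite Tset"
proof -
  have f: "finite {E. E \<subseteq> {s+1..r} \<and> card E = m}" by (rule finite_subset[of _ "Pow {s+1..r}"]) auto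
  show ?thesis unfolding Tset_def
    by (intro finite_cartesian_product finite_PiE finite_SigmaI f) (auto dest: finite_subset)
qed

end

context T1 begin

definition gr :: "nat set \<Rightarrow> (nat \<Rightarrow> nat) \<Rightarrow> (nat \<times> nat) set" where "gr E J = (\<lambda>i. (i, J i)) ` E"
definition XS :: "nat set \<Rightarrow> (nat \<Rightarrow> nat) \<Rightarrow> nat \<Rightarrow> complex" where "XS E J = (SOME c. \<forall>a\<in>(\<lambda>(i,j). al i j) ` gr E J. cf m a c = 0)"
definition MS :: "nat set \<Rightarrow> nat \<Rightarrow> complex" where "MS E = (SOME c. \<forall>a\<in>ee ` ({s+1..r}-E). cf p a c = 0)"
definition PhiF :: "(nat \<Rightarrow> nat) \<Rightarrow> nat set \<Rightarrow> (nat \<Rightarrow> nat) \<Rightarrow> nat \<Rightarrow> complex" where "PhiF g E J = (\<lambda>k. if k \<in> {1..s} then of_nat (g k) else if k \<in> {s+1..n} then XS E J (k-s)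
    else if k \<in> {n+1..r} then MS E (k-n) else 0)"
definition Phi :: "(nat \<Rightarrow> nat) \<times> nat set \<times> (nat \<Rightarrow> nat) \<Rightarrow> nat \<Rightarrow> complex" where "Phi = (\<lambda>(g,E,J). PhiF g E J)"

lemma T_mem: "(g,E,J) \<in> Tset \<longleftrightarrow> g \<in> PiE {1..s} (\<lambda>i. {1..dd i}) \<and> E \<subseteq> {s+1..r} \<and> card E = m \<and> J \<in> PiE E (\<lambda>i. {1..dd i})"
  unfolding Tset_def by auto

lemma card_range: "card {s+1..r} = m + p" using mpr by simp

lemma gr_facts:
  assumes "(g,E,J) \<in> Tset"
  shows "gr E J \<subseteq> Pairs" "card (gr E J) = m" "finite E"
proof -
  have E: "E \<subseteq> {s+1..r}" "card E = m" "J \<in> PiE E (\<lambda>i. {1..dd i})" using assms T_mem by auto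
  show "finite E" using E(1) by (rule finite_subset) simp
  show "gr E J \<subseteq> Pairs" using E by (auto simp: gr_def Pairs_def)
  have "inj_on (\<lambda>i. (i, J i)) E" by (rule inj_onI) simp
  then show "card (gr E J) = m" unfolding gr_def using E by (simp add: card_image)
qed

lemma XS_sol:
  assumes "(g,E,J) \<in> Tset"
  shows "\<forall>a\<in>(\<lambda>(i,j). al i j) ` gr E J. cf m a (XS E J) = 0"
proof -
  note gf = gr_facts[OF assms]
  have fin: "finite (gr E J)" using gf(1) Pairs_fin by (rule finite_subset)
  have "card ((\<lambda>(i,j). al i j) ` gr E J) = m"
    using card_image[OF inj_on_subset[OF al_inj gf(1)]] gf(2) by simp
  from cf_exists[OF finite_imageI[OF fin] this] show ?thesis
    unfolding XS_def by (rule someI_ex)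
qed

lemma MS_sol:
  assumes "(g,E,J) \<in> Tset"
  shows "\<forall>a\<in>ee ` ({s+1..r}-E). cf p a (MS E) = 0"
proof -
  have E: "E \<subseteq> {s+1..r}" "card E = m" using assms T_mem by auto
  have fE: "finite E" using gr_facts[OF assms] by simp
  have "card ({s+1..r}-E) = p" using card_Diff_subset[OF fE E(1)] E(2) card_range by simp
  moreover have "inj_on ee ({s+1..r}-E)" using ee_inj by (rule inj_on_subset) auto
  ultimately have "card (ee ` ({s+1..r}-E)) = p" by (simp add: card_image)
  from cf_exists[OF _ this] show ?thesis
    unfolding MS_def by (rule someI_ex) simp
qed

lemma PH_Phi: "PH i j (PhiF g E J) = cf m (al i j) (XS E J)"
  unfolding PH_def by (rule cf_cong) (auto simp: PhiF_def m_def)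

lemma PS_Phi: "PS i (PhiF g E J) = cf p (ee i) (MS E)"
  unfolding PS_def using mpr by (intro cf_cong) (auto simp: PhiF_def)

lemma Zphi_Phi:
  assumes "(g,E,J) \<in> Tset"
  shows "Zphi (PhiF g E J) = gr E J"
proof -
  have E: "E \<subseteq> {s+1..r}" "J \<in> PiE E (\<lambda>i. {1..dd i})" using assms T_mem by auto
  have sub: "gr E J \<subseteq> Zphi (PhiF g E J)"
  proof
    fix x assume x: "x \<in> gr E J"
    then obtain i where i: "i \<in> E" "x = (i, J i)" by (auto simp: gr_def)
    have "cf m (al i (J i)) (XS E J) = 0" using XS_sol[OF assms] x i by force
    then show "x \<in> Zphi (PhiF g E J)" using i E by (auto simp: Zphi_def PH_Phi)
  qed
  have fin: "finite (Zphi (PhiF g E J))" using Zphi_sub Pairs_fin by (rule finite_subset)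
  show ?thesis
    using card_seteq[OF fin sub] card_Zphi gr_facts(2)[OF assms] by simp
qed

lemma Zpsi_Phi:
  assumes "(g,E,J) \<in> Tset"
  shows "{s+1..r} - E \<subseteq> Zpsi (PhiF g E J)"
proof
  fix i assume i: "i \<in> {s+1..r} - E"
  have "cf p (ee i) (MS E) = 0" using MS_sol[OF assms] i by blast
  then show "i \<in> Zpsi (PhiF g E J)" using i by (simp add: Zpsi_def PS_Phi)
qed

lemma Phi_V:
  assumes "(g,E,J) \<in> Tset"
  shows "PhiF g E J \<in> zero_set r (type1_chart n s d dd)"
proof -
  have T: "g \<in> PiE {1..s} (\<lambda>i. {1..dd i})" "E \<subseteq> {s+1..r}" using assms T_mem by auto
  have "\<forall>k. k \<notin> {1..r} \<longrightarrow> PhiF g E J k = 0" using mpr by (auto simp: PhiF_def)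
  moreover have "\<forall>i\<in>{1..s}. \<exists>j\<in>{1..dd i}. PhiF g E J i = of_nat j"
    using T(1) by (auto simp: PhiF_def)
  moreover have "\<forall>i\<in>{s+1..r}. (\<exists>j\<in>{1..dd i}. PH i j (PhiF g E J) = 0) \<or> PS i (PhiF g E J) = 0"
  proof
    fix i assume i: "i \<in> {s+1..r}"
    show "(\<exists>j\<in>{1..dd i}. PH i j (PhiF g E J) = 0) \<or> PS i (PhiF g E J) = 0"
    proof (cases "i \<in> E")
      case True
      then have "(i, J i) \<in> Zphi (PhiF g E J)" using Zphi_Phi[OF assms] by (auto simp: gr_def)
      then show ?thesis by (auto simp: Zphi_def)
    next
      case False
      then show ?thesis using Zpsi_Phi[OF assms] i by (auto simp: Zpsi_def)
    qed
  qed
  ultimately show ?thesis using inV by blast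
qed

lemma Phi_inj_proj:
  assumes t: "(g,E,J) \<in> Tset" and t': "(g',E',J') \<in> Tset"
    and eq: "proj_x n (PhiF g E J) = proj_x n (PhiF g' E' J')"
  shows "(g,E,J) = (g',E',J')"
proof -
  have eqk: "PhiF g E J k = PhiF g' E' J' k" if "k \<in> {1..n}" for k
    using fun_cong[OF eq, of k] that by (simp add: proj_x_def)
  have T: "g \<in> PiE {1..s} (\<lambda>i. {1..dd i})" "J \<in> PiE E (\<lambda>i. {1..dd i})" using t T_mem by auto
  have T': "g' \<in> PiE {1..s} (\<lambda>i. {1..dd i})" "J' \<in> PiE E' (\<lambda>i. {1..dd i})" using t' T_mem by auto
  have "g = g'"
  proof (rule PiE_ext[OF T(1) T'(1)])
    fix k assume k: "k \<in> {1..s}"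
    then have "PhiF g E J k = PhiF g' E' J' k" using eqk sn by auto
    then show "g k = g' k" using k by (simp add: PhiF_def)
  qed
  have "Zphi (PhiF g E J) = Zphi (PhiF g' E' J')"
    by (rule Zphi_cong) (use eqk s1 in auto)
  then have G: "gr E J = gr E' J'" using Zphi_Phi[OF t] Zphi_Phi[OF t'] by simp
  have "E = E'"
  proof -
    have "fst ` gr E J = E" "fst ` gr E' J' = E'" by (auto simp: gr_def image_image)
    then show ?thesis using G by simp
  qed
  have "J = J'"
  proof (rule PiE_ext[OF T(2)])
    show "J' \<in> PiE E (\<lambda>i. {1..dd i})" using T'(2) \<open>E = E'\<close> by simp
    fix i assume i: "i \<in> E"
    then have "(i, J i) \<in> gr E' J'" using G by (auto simp: gr_def)
    then show "J i = J' i" by (auto simp: gr_def)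
  qed
  show ?thesis using \<open>g = g'\<close> \<open>E = E'\<close> \<open>J = J'\<close> by simp
qed

lemma Phi_surj:
  assumes zV: "z \<in> zero_set r (type1_chart n s d dd)"
  shows "\<exists>g E J. (g,E,J) \<in> Tset \<and> z = PhiF g E J"
proof -
  note V = zV[unfolded inV]
  define g where "g = restrict (\<lambda>k. SOME j. j \<in> {1..dd k} \<and> z k = of_nat j) {1..s}"
  define E where "E = fst ` Zphi z"
  define J where "J = restrict (\<lambda>i. SOME j. (i,j) \<in> Zphi z) E"
  have finZ: "finite (Zphi z)" using Zphi_sub Pairs_fin by (rule finite_subset)
  have g1: "g k \<in> {1..dd k} \<and> z k = of_nat (g k)" if "k \<in> {1..s}" for k
  proof -
    have "\<exists>j. j \<in> {1..dd k} \<and> z k = of_nat j" using V that by blast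
    then show ?thesis unfolding g_def using that by (simp del: atLeastAtMost_iff) (rule someI_ex)
  qed
  have gT: "g \<in> PiE {1..s} (\<lambda>i. {1..dd i})" using g1 by (auto simp: g_def)
  have Esub: "E \<subseteq> {s+1..r}" by (auto simp: E_def Zphi_def)
  have J1: "(i, J i) \<in> Zphi z" if "i \<in> E" for i
  proof -
    have "\<exists>j. (i,j) \<in> Zphi z" using that by (auto simp: E_def)
    then show ?thesis unfolding J_def using that by simp (rule someI_ex)
  qed
  have JT: "J \<in> PiE E (\<lambda>i. {1..dd i})"
  proof (rule PiE_I)
    fix i assume "i \<in> E"
    then have "(i, J i) \<in> Zphi z" by (rule J1)
    then show "J i \<in> {1..dd i}" by (simp add: Zphi_def)
  next
    fix i assume "i \<notin> E"
    then show "J i = undefined" by (simp add: J_def)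
  qed
  have cover: "{s+1..r} \<subseteq> E \<union> Zpsi z"
  proof
    fix i assume i: "i \<in> {s+1..r}"
    then have "(\<exists>j\<in>{1..dd i}. PH i j z = 0) \<or> PS i z = 0" using V by blast
    then show "i \<in> E \<union> Zpsi z" using i by (force simp: E_def Zphi_def Zpsi_def)
  qed
  have finE: "finite E" using Esub by (rule finite_subset) simp
  have cE1: "card E \<le> card (Zphi z)" unfolding E_def using finZ by (rule card_image_le)
  have finP: "finite (Zpsi z)" by (rule finite_subset[of _ "{s+1..r}"]) (auto simp: Zpsi_def)
  have "m + p \<le> card (E \<union> Zpsi z)" using card_mono[OF _ cover] finE finP card_range by simp
  also have "\<dots> \<le> card E + card (Zpsi z)" by (rule card_Un_le)
  finally have "card E \<ge> m" using card_Zpsi[of z] by simp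
  then have cE: "card E = m" and cZ: "card (Zphi z) = m" using cE1 card_Zphi[of z] by auto
  have injf: "inj_on fst (Zphi z)"
    by (rule eq_card_imp_inj_on[OF finZ]) (use cE cZ in \<open>simp add: E_def\<close>)
  have T: "(g,E,J) \<in> Tset" using gT Esub cE JT T_mem by simp
  have grZ: "gr E J = Zphi z"
  proof
    show "gr E J \<subseteq> Zphi z" using J1 by (auto simp: gr_def)
    show "Zphi z \<subseteq> gr E J"
    proof
      fix x assume x: "x \<in> Zphi z"
      then have i: "fst x \<in> E" by (simp add: E_def)
      then have xJ: "(fst x, J (fst x)) \<in> Zphi z" by (rule J1)
      have "x = (fst x, J (fst x))" using inj_onD[OF injf _ x xJ] by simp
      then show "x \<in> gr E J" using i by (auto simp: gr_def)
    qed
  qed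
  have Xeq: "\<forall>k\<in>{1..m}. z (s+k) = XS E J k"
  proof (rule cf_unique)
    show "finite ((\<lambda>(i,j). al i j) ` gr E J)" using grZ finZ by simp
    show "card ((\<lambda>(i,j). al i j) ` gr E J) = m"
      using card_image[OF inj_on_subset[OF al_inj Zphi_sub]] grZ cZ by simp
    show "\<forall>a\<in>(\<lambda>(i,j). al i j) ` gr E J. cf m a (\<lambda>k. z (s+k)) = 0"
      using grZ by (auto simp: Zphi_def PH_def)
    show "\<forall>a\<in>(\<lambda>(i,j). al i j) ` gr E J. cf m a (XS E J) = 0" by (rule XS_sol[OF T])
  qed
  have Meq: "\<forall>k\<in>{1..p}. z (n+k) = MS E k"
  proof (rule cf_unique)
    show "finite (ee ` ({s+1..r}-E))" by simp
    have "card ({s+1..r}-E) = p" using card_Diff_subset[OF finE Esub] cE card_range by simp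
    moreover have "inj_on ee ({s+1..r}-E)" using ee_inj by (rule inj_on_subset) auto
    ultimately show "card (ee ` ({s+1..r}-E)) = p" by (simp add: card_image)
    have "PS i z = 0" if "i \<in> {s+1..r}-E" for i using cover that by (auto simp: Zpsi_def)
    then show "\<forall>a\<in>ee ` ({s+1..r}-E). cf p a (\<lambda>k. z (n+k)) = 0" by (auto simp: PS_def)
    show "\<forall>a\<in>ee ` ({s+1..r}-E). cf p a (MS E) = 0" by (rule MS_sol[OF T])
  qed
  have zeq: "z = PhiF g E J"
  proof
    fix k
    show "z k = PhiF g E J k"
    proof (cases "k \<in> {1..s}")
      case True then show ?thesis using g1 by (simp add: PhiF_def)
    next
      case k1: False
      show ?thesis
      proof (cases "k \<in> {s+1..n}")
        case True
        then have "k - s \<in> {1..m}" "s + (k - s) = k" by (auto simp: m_def)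
        then show ?thesis using Xeq k1 True by (force simp: PhiF_def)
      next
        case k2: False
        show ?thesis
        proof (cases "k \<in> {n+1..r}")
          case True
          then have "k - n \<in> {1..p}" "n + (k - n) = k" using mpr by auto
          then show ?thesis using Meq k1 k2 True by (force simp: PhiF_def)
        next
          case False
          then have "k \<notin> {1..r}" using k1 k2 by auto
          then have "z k = 0" using conjunct1[OF V] by simp
          moreover have "PhiF g E J k = 0" unfolding PhiF_def by (simp only: if_not_P[OF k1] if_not_P[OF k2] if_not_P[OF False])
          ultimately show ?thesis by simp
        qed
      qed
    qed
  qed
  show ?thesis
    by (rule exI[of _ g], rule exI[of _ E], rule exI[of _ J]) (rule conjI[OF T zeq])
qed

end

lemma sum_shift_nat: fixes h :: "nat \<Rightarrow> 'a::comm_monoid_add" and off N :: nat shows "(\<Sum>q\<in>{off+1..off+N}. h q) = (\<Sum>k=1..N. h (off+k))"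
  using sum.shift_bounds_cl_nat_ivl[of h 1 off N] by (simp add: add_ac)

lemma sum_if_restrict: "finite A \<Longrightarrow> X \<subseteq> A \<Longrightarrow> (\<Sum>q\<in>A. if q \<in> X then f q else 0) = (\<Sum>q\<in>X. f q)"
  using sum.inter_restrict[of A f X] by (simp add: Int_absorb1)

lemma prod_aff_root:
  fixes c :: "nat \<Rightarrow> complex"
  assumes "finite S" "j0 \<in> S" "c j0 = 0"
  shows "(\<Sum>j\<in>S. b j * (\<Prod>l\<in>S-{j}. c l)) = b j0 * (\<Prod>l\<in>S-{j0}. c l)"
proof -
  have "(\<Sum>j\<in>S. b j * (\<Prod>l\<in>S-{j}. c l)) = (\<Sum>j\<in>S. if j = j0 then b j0 * (\<Prod>l\<in>S-{j0}. c l) else 0)"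
  proof (rule sum.cong[OF refl])
    fix j assume j: "j \<in> S"
    show "b j * (\<Prod>l\<in>S-{j}. c l) = (if j = j0 then b j0 * (\<Prod>l\<in>S-{j0}. c l) else 0)"
    proof (cases "j = j0")
      case False
      then have "(\<Prod>l\<in>S-{j}. c l) = 0" using assms by (intro prod_zero) auto
      then show ?thesis using False by simp
    qed simp
  qed
  also have "\<dots> = b j0 * (\<Prod>l\<in>S-{j0}. c l)" using assms by (simp add: sum.delta)
  finally show ?thesis .
qed

context T1 begin

definition "bq i q j = (if q \<in> {s+1..n} then 1 / of_nat (al i j + (q - s)) else (0::complex))"
definition "Bq i q = (if q \<in> {n+1..r} then 1 / of_nat (ee i + (q - n)) else (0::complex))"

lemma PH_upd: "PH i j (z(q:=t)) = PH i j z + bq i q j * (t - z q)"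
  unfolding PH_def cf_upd[of m _ z q t s] bq_def using mpr by simp

lemma PS_upd: "PS i (z(q:=t)) = PS i z + Bq i q * (t - z q)"
  unfolding PS_def cf_upd[of p _ z q t n] Bq_def using mpr by simp

lemma partial_hi:
  assumes i: "i \<in> {s+1..r}"
  shows "partial (type1_chart n s d dd i) q z =
    (\<Sum>j\<in>{1..dd i}. bq i q j * (\<Prod>l\<in>{1..dd i}-{j}. PH i l z)) * PS i z + (\<Prod>j\<in>{1..dd i}. PH i j z) * Bq i q"
proof (rule partial_eqI)
  fix t
  show "type1_chart n s d dd i (z(q:=t)) =
     (\<Prod>j\<in>{1..dd i}. (PH i j z + bq i q j * (t - z q))) * (PS i z + Bq i q * (t - z q))"
    unfolding chart_hi[OF i] PH_upd PS_upd ..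
qed (rule deriv_prod_aff2)

lemma partial_lo:
  assumes i: "i \<in> {1..s}"
  shows "partial (type1_chart n s d dd i) q z =
    (if q = i then (\<Sum>j\<in>{1..dd i}. (\<Prod>l\<in>{1..dd i}-{j}. (z i - of_nat l))) else 0)"
proof -
  have "partial (type1_chart n s d dd i) q z =
    (\<Sum>j\<in>{1..dd i}. (if q = i then 1 else 0) * (\<Prod>l\<in>{1..dd i}-{j}. (z i - of_nat l)))"
  proof (rule partial_eqI)
    fix t
    show "type1_chart n s d dd i (z(q:=t)) =
       (\<Prod>j\<in>{1..dd i}. ((z i - of_nat j) + (if q = i then 1 else 0) * (t - z q)))"
      unfolding chart_lo[OF i] by (rule prod.cong) auto
  qed (rule deriv_prod_aff)
  then show ?thesis by simp
qed

lemma Zpsi_Phi_eq: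
  assumes T: "(g,E,J) \<in> Tset"
  shows "Zpsi (PhiF g E J) = {s+1..r} - E"
proof -
  have E: "E \<subseteq> {s+1..r}" "card E = m" using T T_mem by auto
  have fE: "finite E" using gr_facts[OF T] by simp
  have c: "card ({s+1..r}-E) = p" using card_Diff_subset[OF fE E(1)] E(2) card_range by simp
  have fin: "finite (Zpsi (PhiF g E J))" by (rule finite_subset[of _ "{s+1..r}"]) (auto simp: Zpsi_def)
  show ?thesis using card_seteq[OF fin Zpsi_Phi[OF T]] card_Zpsi c by simp
qed

lemma jac_nz:
  assumes T: "(g,E,J) \<in> Tset"
  shows "jacobian_det r (type1_chart n s d dd) (PhiF g E J) \<noteq> 0"
  unfolding jacobian_det_def
proof (rule leibniz_nz)
  let ?z = "PhiF g E J"
  fix v assume H: "\<forall>i\<in>{1..r}. (\<Sum>q=1..r. partial (type1_chart n s d dd i) q ?z * v q) = 0"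
  have TT: "g \<in> PiE {1..s} (\<lambda>i. {1..dd i})" "E \<subseteq> {s+1..r}" "card E = m" "J \<in> PiE E (\<lambda>i. {1..dd i})"
    using T T_mem by auto
  have ZP: "Zphi ?z = gr E J" by (rule Zphi_Phi[OF T])
  have ZS: "Zpsi ?z = {s+1..r} - E" by (rule Zpsi_Phi_eq[OF T])
  have va: "v i = 0" if i: "i \<in> {1..s}" for i
  proof -
    have ir: "i \<in> {1..r}" using i mpr by auto
    define D where "D = (\<Sum>j\<in>{1..dd i}. (\<Prod>l\<in>{1..dd i}-{j}. (?z i - of_nat l)))"
    have "(\<Sum>q=1..r. partial (type1_chart n s d dd i) q ?z * v q) = (\<Sum>q=1..r. if q = i then D * v i else 0)"
      by (rule sum.cong) (auto simp: partial_lo[OF i] D_def)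
    also have "\<dots> = D * v i" using ir by (simp add: sum.delta)
    finally have Dv: "D * v i = 0" using H ir by simp
    have gi: "g i \<in> {1..dd i}" "?z i = of_nat (g i)" using TT(1) i by (auto simp: PhiF_def)
    have "D = 1 * (\<Prod>l\<in>{1..dd i}-{g i}. (?z i - of_nat l))"
      unfolding D_def using prod_aff_root[of "{1..dd i}" "g i" "\<lambda>l. ?z i - of_nat l" "\<lambda>_. 1"] gi by simp
    moreover have "(\<Prod>l\<in>{1..dd i}-{g i}. (?z i - of_nat l)) \<noteq> 0"
      using gi(2) by (simp add: prod_zero_iff)
    ultimately have "D \<noteq> 0" by simp
    with Dv show "v i = 0" by simp
  qed
  have vb: "v (s+k) = 0" if k: "k \<in> {1..m}" for k
  proof -
    have A1: "\<forall>a\<in>(\<lambda>(i,j). al i j) ` gr E J. (\<Sum>k=1..m. v (s+k) / of_nat (a+k)) = 0"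
    proof
      fix a assume "a \<in> (\<lambda>(i,j). al i j) ` gr E J"
      then obtain i where i: "i \<in> E" "a = al i (J i)" by (auto simp: gr_def)
      have ir: "i \<in> {s+1..r}" "i \<in> {1..r}" using i TT(2) by auto
      have Ji: "J i \<in> {1..dd i}" using TT(4) i by auto
      have PH0: "PH i (J i) ?z = 0" using ZP i by (auto simp: gr_def Zphi_def)
      define L where "L = (\<Prod>l\<in>{1..dd i}-{J i}. PH i l ?z)"
      have Lnz: "L \<noteq> 0"
      proof -
        have "PH i l ?z \<noteq> 0" if l: "l \<in> {1..dd i}-{J i}" for l
        proof
          assume "PH i l ?z = 0"
          then have "(i,l) \<in> gr E J" using ZP ir l by (auto simp: Zphi_def)
          then show False using l by (auto simp: gr_def)
        qed
        then show ?thesis unfolding L_def by (simp add: prod_zero_iff)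
      qed
      have PSnz: "PS i ?z \<noteq> 0" using ZS i ir by (auto simp: Zpsi_def)
      have row: "partial (type1_chart n s d dd i) q ?z = bq i q (J i) * (L * PS i ?z)" for q
      proof -
        have "(\<Prod>j\<in>{1..dd i}. PH i j ?z) = 0" using PH0 Ji by (intro prod_zero) auto
        moreover have "(\<Sum>j\<in>{1..dd i}. bq i q j * (\<Prod>l\<in>{1..dd i}-{j}. PH i l ?z)) = bq i q (J i) * L"
          unfolding L_def by (rule prod_aff_root) (use Ji PH0 in auto)
        ultimately show ?thesis unfolding partial_hi[OF ir(1)] by simp
      qed
      have "(\<Sum>q=1..r. bq i q (J i) * v q) = (\<Sum>q\<in>{s+1..n}. v q / of_nat (al i (J i) + (q - s)))"
      proof -
        have "(\<Sum>q=1..r. bq i q (J i) * v q) = (\<Sum>q=1..r. if q \<in> {s+1..n} then v q / of_nat (al i (J i) + (q - s)) else 0)"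
          by (rule sum.cong) (auto simp: bq_def)
        also have "\<dots> = (\<Sum>q\<in>{s+1..n}. v q / of_nat (al i (J i) + (q - s)))"
          by (rule sum_if_restrict) (use mpr in auto)
        finally show ?thesis .
      qed
      also have "\<dots> = (\<Sum>k=1..m. v (s+k) / of_nat (al i (J i) + k))"
        using sum_shift_nat[of "\<lambda>q. v q / of_nat (al i (J i) + (q - s))" s m] mpr by simp
      finally have S: "(\<Sum>q=1..r. bq i q (J i) * v q) = (\<Sum>k=1..m. v (s+k) / of_nat (al i (J i) + k))" .
      have "(\<Sum>q=1..r. partial (type1_chart n s d dd i) q ?z * v q) = (L * PS i ?z) * (\<Sum>q=1..r. bq i q (J i) * v q)"
        unfolding row by (simp add: sum_distrib_left ac_simps)
      then have "(L * PS i ?z) * (\<Sum>k=1..m. v (s+k) / of_nat (al i (J i) + k)) = 0"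
        using H ir S by simp
      then show "(\<Sum>k=1..m. v (s+k) / of_nat (a+k)) = 0" using Lnz PSnz i by simp
    qed
    have A2: "finite ((\<lambda>(i,j). al i j) ` gr E J)"
      using finite_subset[OF gr_facts(1)[OF T] Pairs_fin] by simp
    have A3: "card ((\<lambda>(i,j). al i j) ` gr E J) = m"
      using card_image[OF inj_on_subset[OF al_inj gr_facts(1)[OF T]]] gr_facts(2)[OF T] by simp
    show ?thesis using cauchy_ker[OF A2 A3 A1] k by simp
  qed
  have vc: "v (n+k) = 0" if k: "k \<in> {1..p}" for k
  proof -
    have A1: "\<forall>a\<in>ee ` ({s+1..r}-E). (\<Sum>k=1..p. v (n+k) / of_nat (a+k)) = 0"
    proof
      fix a assume "a \<in> ee ` ({s+1..r}-E)"
      then obtain i where i: "i \<in> {s+1..r}-E" "a = ee i" by auto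
      have ir: "i \<in> {s+1..r}" "i \<in> {1..r}" using i by auto
      have "i \<in> Zpsi ?z" using ZS i by simp
      then have PS0: "PS i ?z = 0" by (simp add: Zpsi_def)
      define L where "L = (\<Prod>l\<in>{1..dd i}. PH i l ?z)"
      have Lnz: "L \<noteq> 0"
      proof -
        have "PH i l ?z \<noteq> 0" if l: "l \<in> {1..dd i}" for l
        proof
          assume "PH i l ?z = 0"
          then have "(i,l) \<in> gr E J" using ZP ir l by (auto simp: Zphi_def)
          then show False using i by (auto simp: gr_def)
        qed
        then show ?thesis unfolding L_def by (simp add: prod_zero_iff)
      qed
      have row: "partial (type1_chart n s d dd i) q ?z = Bq i q * L" for q
        unfolding partial_hi[OF ir(1)] PS0 L_def by simp
      have "(\<Sum>q=1..r. Bq i q * v q) = (\<Sum>q\<in>{n+1..r}. v q / of_nat (ee i + (q - n)))"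
      proof -
        have "(\<Sum>q=1..r. Bq i q * v q) = (\<Sum>q=1..r. if q \<in> {n+1..r} then v q / of_nat (ee i + (q - n)) else 0)"
          by (rule sum.cong) (auto simp: Bq_def)
        also have "\<dots> = (\<Sum>q\<in>{n+1..r}. v q / of_nat (ee i + (q - n)))"
          by (rule sum_if_restrict) (use mpr in auto)
        finally show ?thesis .
      qed
      also have "\<dots> = (\<Sum>k=1..p. v (n+k) / of_nat (ee i + k))"
        using sum_shift_nat[of "\<lambda>q. v q / of_nat (ee i + (q - n))" n p] mpr by simp
      finally have S: "(\<Sum>q=1..r. Bq i q * v q) = (\<Sum>k=1..p. v (n+k) / of_nat (ee i + k))" .
      have "(\<Sum>q=1..r. partial (type1_chart n s d dd i) q ?z * v q) = L * (\<Sum>q=1..r. Bq i q * v q)"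
        unfolding row by (simp add: sum_distrib_left ac_simps)
      then have "L * (\<Sum>k=1..p. v (n+k) / of_nat (ee i + k)) = 0"
        using H ir S by simp
      then show "(\<Sum>k=1..p. v (n+k) / of_nat (a+k)) = 0" using Lnz i by simp
    qed
    have A3: "card (ee ` ({s+1..r}-E)) = p"
    proof -
      have fE: "finite E" using gr_facts[OF T] by simp
      have "card ({s+1..r}-E) = p" using card_Diff_subset[OF fE TT(2)] TT(3) card_range by simp
      moreover have "inj_on ee ({s+1..r}-E)" using ee_inj by (rule inj_on_subset) auto
      ultimately show ?thesis by (simp add: card_image)
    qed
    have A2: "finite (ee ` ({s+1..r}-E))" by simp
    show ?thesis using cauchy_ker[OF A2 A3 A1] k by simp
  qed
  show "\<forall>q\<in>{1..r}. v q = 0"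
  proof
    fix q assume q: "q \<in> {1..r}"
    show "v q = 0"
    proof (cases "q \<le> s")
      case True then show ?thesis using va q by auto
    next
      case False
      show ?thesis
      proof (cases "q \<le> n")
        case True
        then have "q - s \<in> {1..m}" "s + (q - s) = q" using False by (auto simp: m_def)
        then show ?thesis using vb by metis
      next
        case False
        then have "q - n \<in> {1..p}" "n + (q - n) = q" using q mpr by auto
        then show ?thesis using vc by metis
      qed
    qed
  qed
qed

end

lemma partial_grid:
  assumes f: "\<And>w. f w = (\<Prod>j\<in>{1..K}. (w i - of_nat j))"
  shows "partial f q z = (if q = i then (\<Sum>j\<in>{1..K}. (\<Prod>l\<in>{1..K}-{j}. (z i - of_nat l))) else 0)"
proof -
  have "partial f q z =
    (\<Sum>j\<in>{1..K}. (if q = i then 1 else 0) * (\<Prod>l\<in>{1..K}-{j}. (z i - of_nat l)))"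
  proof (rule partial_eqI)
    fix t
    show "f (z(q:=t)) = (\<Prod>j\<in>{1..K}. ((z i - of_nat j) + (if q = i then 1 else 0) * (t - z q)))"
      unfolding f by (rule prod.cong) auto
  qed (rule deriv_prod_aff)
  then show ?thesis by simp
qed

lemma grid_D_nz:
  assumes g: "g \<in> {1..K}"
  shows "(\<Sum>j\<in>{1..K}. (\<Prod>l\<in>{1..K}-{j}. (of_nat g - of_nat l :: complex))) \<noteq> 0"
proof -
  have "(\<Sum>j\<in>{1..K}. (\<Prod>l\<in>{1..K}-{j}. (of_nat g - of_nat l :: complex))) =
        1 * (\<Prod>l\<in>{1..K}-{g}. (of_nat g - of_nat l))"
    using prod_aff_root[of "{1..K}" g "\<lambda>l. of_nat g - of_nat l :: complex" "\<lambda>_. 1"] g by simp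
  moreover have "(\<Prod>l\<in>{1..K}-{g}. (of_nat g - of_nat l :: complex)) \<noteq> 0"
    by (simp add: prod_zero_iff)
  ultimately show ?thesis by simp
qed

definition "PsiG n g = (\<lambda>k. if k \<in> {1..n} then of_nat (g k) else (0::complex))"

lemma simple_V: "z \<in> zero_set n (type1_simple dd) \<longleftrightarrow>
   (\<forall>k. k \<notin> {1..n} \<longrightarrow> z k = 0) \<and> (\<forall>i\<in>{1..n}. \<exists>j\<in>{1..dd i}. z i = of_nat j)"
  unfolding zero_set_def type1_simple_def by simp

lemma simple_case:
  "finite (zero_set n (type1_simple dd))
   \<and> card (zero_set n (type1_simple dd)) = (\<Prod>i=1..n. dd i)
   \<and> (\<forall>z\<in>zero_set n (type1_simple dd). jacobian_det n (type1_simple dd) z \<noteq> 0)"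
proof -
  let ?V = "zero_set n (type1_simple dd)"
  let ?P = "PiE {1..n} (\<lambda>i. {1..dd i})"
  have img: "PsiG n ` ?P = ?V"
  proof
    show "PsiG n ` ?P \<subseteq> ?V"
    proof (rule image_subsetI)
      fix g assume g: "g \<in> ?P"
      show "PsiG n g \<in> ?V" unfolding simple_V PsiG_def using PiE_mem[OF g] by auto
    qed
    show "?V \<subseteq> PsiG n ` ?P"
    proof
      fix z assume zV: "z \<in> ?V"
      note V = zV[unfolded simple_V]
      define g where "g = restrict (\<lambda>k. SOME j. j \<in> {1..dd k} \<and> z k = of_nat j) {1..n}"
      have g1: "g k \<in> {1..dd k} \<and> z k = of_nat (g k)" if "k \<in> {1..n}" for k
      proof -
        have "\<exists>j. j \<in> {1..dd k} \<and> z k = of_nat j" using V that by blast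
        then show ?thesis unfolding g_def using that by (simp del: atLeastAtMost_iff) (rule someI_ex)
      qed
      have "g \<in> ?P" using g1 by (auto simp: g_def)
      moreover have "z = PsiG n g"
      proof
        fix k show "z k = PsiG n g k"
        proof (cases "k \<in> {1..n}")
          case True then show ?thesis using g1 by (simp add: PsiG_def)
        next
          case False
          then have "z k = 0" using conjunct1[OF V] by simp
          moreover have "PsiG n g k = 0" unfolding PsiG_def by (simp only: if_not_P[OF False])
          ultimately show ?thesis by simp
        qed
      qed
      ultimately show "z \<in> PsiG n ` ?P" by blast
    qed
  qed
  have inj: "inj_on (PsiG n) ?P"
  proof (rule inj_onI)
    fix g g' assume g: "g \<in> ?P" and g': "g' \<in> ?P" and e: "PsiG n g = PsiG n g'"
    show "g = g'"
    proof (rule PiE_ext[OF g g'])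
      fix k assume k: "k \<in> {1..n}"
      then show "g k = g' k" using fun_cong[OF e, of k] by (simp add: PsiG_def)
    qed
  qed
  have fin: "finite ?V" using img by (metis finite_PiE finite_atLeastAtMost finite_imageI)
  have card: "card ?V = (\<Prod>i=1..n. dd i)"
    using card_image[OF inj] img by (simp add: card_PiE)
  have jac: "jacobian_det n (type1_simple dd) z \<noteq> 0" if zV: "z \<in> ?V" for z
    unfolding jacobian_det_def
  proof (rule leibniz_nz)
    fix v assume H: "\<forall>i\<in>{1..n}. (\<Sum>q=1..n. partial (type1_simple dd i) q z * v q) = 0"
    show "\<forall>q\<in>{1..n}. v q = 0"
    proof
      fix i assume i: "i \<in> {1..n}"
      have "\<exists>j\<in>{1..dd i}. z i = of_nat j" using zV i unfolding simple_V by blast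
      then obtain j where j: "j \<in> {1..dd i}" "z i = of_nat j" by blast
      define D where "D = (\<Sum>j\<in>{1..dd i}. (\<Prod>l\<in>{1..dd i}-{j}. (z i - of_nat l)))"
      have pd: "partial (type1_simple dd i) q z = (if q = i then D else 0)" for q
        unfolding D_def by (rule partial_grid) (simp add: type1_simple_def)
      have "(\<Sum>q=1..n. partial (type1_simple dd i) q z * v q) = (\<Sum>q=1..n. if q = i then D * v i else 0)"
        by (rule sum.cong) (auto simp: pd)
      also have "\<dots> = D * v i" using i by (simp add: sum.delta)
      finally have "D * v i = 0" using H i by simp
      moreover have "D \<noteq> 0" unfolding D_def j(2) by (rule grid_D_nz[OF j(1)])
      ultimately show "v i = 0" by simp
    qed
  qed
  show ?thesis using fin card jac by blast
qed

lemma main_case: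
  fixes n s d :: nat and dd :: "nat \<Rightarrow> nat"
  assumes "1 < s" "s < n" "d \<ge> 1" "\<forall>i\<in>{1..s+n-1}. 1 \<le> dd i \<and> dd i \<le> d"
  shows "finite (zero_set (s+n-1) (type1_chart n s d dd))
     \<and> card (zero_set (s+n-1) (type1_chart n s d dd)) = (\<Prod>i=1..s. dd i) *
          (\<Sum>E | E \<subseteq> {s+1..s+n-1} \<and> card E = n - s. \<Prod>j\<in>E. dd j)
     \<and> inj_on (proj_x n) (zero_set (s+n-1) (type1_chart n s d dd))
     \<and> (\<forall>z\<in>zero_set (s+n-1) (type1_chart n s d dd). jacobian_det (s+n-1) (type1_chart n s d dd) z \<noteq> 0)"
proof -
  interpret T1 n s d dd using assms by unfold_locales auto
  let ?V = "zero_set r (type1_chart n s d dd)"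
  have img: "Phi ` Tset = ?V"
  proof
    show "Phi ` Tset \<subseteq> ?V" using Phi_V by (auto simp: Phi_def)
    show "?V \<subseteq> Phi ` Tset"
    proof
      fix z assume "z \<in> ?V"
      from Phi_surj[OF this] obtain g E J where "(g,E,J) \<in> Tset" "z = PhiF g E J" by blast
      then show "z \<in> Phi ` Tset" unfolding Phi_def by (metis (no_types, lifting) case_prod_conv image_eqI)
    qed
  qed
  have inj: "inj_on Phi Tset"
  proof (rule inj_onI)
    fix t t' assume t: "t \<in> Tset" and t': "t' \<in> Tset" and e: "Phi t = Phi t'"
    obtain g E J where tt: "t = (g,E,J)" by (cases t) auto
    obtain g' E' J' where tt': "t' = (g',E',J')" by (cases t') auto
    show "t = t'" using Phi_inj_proj[of g E J g' E' J'] t t' e unfolding tt tt' Phi_def by simp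
  qed
  have fin: "finite ?V" by (metis img finite_imageI finite_Tset)
  have card: "card ?V = card Tset" using card_image[OF inj] img by simp
  have injp: "inj_on (proj_x n) ?V"
  proof (rule inj_onI)
    fix z z' assume z: "z \<in> ?V" and z': "z' \<in> ?V" and e: "proj_x n z = proj_x n z'"
    obtain g E J where t: "(g,E,J) \<in> Tset" "z = PhiF g E J" using Phi_surj[OF z] by blast
    obtain g' E' J' where t': "(g',E',J') \<in> Tset" "z' = PhiF g' E' J'" using Phi_surj[OF z'] by blast
    have "(g,E,J) = (g',E',J')" using Phi_inj_proj[OF t(1) t'(1)] e t(2) t'(2) by simp
    then show "z = z'" using t(2) t'(2) by simp
  qed
  have jac: "\<forall>z\<in>?V. jacobian_det r (type1_chart n s d dd) z \<noteq> 0"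
  proof
    fix z assume "z \<in> ?V"
    from Phi_surj[OF this] obtain g E J where "(g,E,J) \<in> Tset" "z = PhiF g E J" by blast
    then show "jacobian_det r (type1_chart n s d dd) z \<noteq> 0" using jac_nz by simp
  qed
  show ?thesis using fin card injp jac card_Tset unfolding r_def m_def by simp
qed

theorem mainTheorem17:
  fixes n s d :: nat and dd :: "nat \<Rightarrow> nat"
  assumes "1 \<le> s" and "s \<le> n" and "d \<ge> 1"
    and "\<forall>i\<in>{1..s+n-1}. 1 \<le> dd i \<and> dd i \<le> d"
  shows "(1 < s \<and> s < n \<longrightarrow>
            (let r = s + n - 1; V = zero_set r (type1_chart n s d dd) in
               finite V
             \<and> card V = (\<Prod>i=1..s. dd i) *
                  (\<Sum>E | E \<subseteq> {s+1..r} \<and> card E = n - s. \<Prod>j\<in>E. dd j)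
             \<and> inj_on (proj_x n) V
             \<and> (\<forall>z\<in>V. jacobian_det r (type1_chart n s d dd) z \<noteq> 0)))
       \<and> (s = 1 \<or> s = n \<longrightarrow>
            (let V = zero_set n (type1_simple dd) in
               finite V
             \<and> card V = (\<Prod>i=1..n. dd i)
             \<and> (\<forall>z\<in>V. jacobian_det n (type1_simple dd) z \<noteq> 0)))"
    unfolding Let_def
  apply (rule conjI)
  subgoal using main_case[of s n d dd] assms by (intro impI) simp
  subgoal using simple_case[of n dd] by (intro impI) simp
  done

end
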